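(* Let $p_1,p_2\in\mathbb{C}$ be linearly independent over $\mathbb{R}$, let $L=\mathbb{Z}p_1+\mathbb{Z}p_2$, and let $\sigma$ be the entire function $$\sigma(z)=z\prod_{\lambda\in L\setminus\{0\}}e^{\frac{z}{\lambda}+\frac{z^2}{2\lambda^2}}\left(1-\frac{z}{\lambda}\right).$$ Then for every $\xi_0\in\mathbb{C}$ and every $j\in\{1,2\}$, $$\frac{\sigma(z)}{\sigma(-\xi_0+z)}\cdot\frac{\sigma(-\xi_0+z+p_j)}{\sigma(z+p_j)}=e^{v_j},$$ as an identity of meromorphic functions of $z$, where $$v_j=-\frac{3\xi_0}{p_j}+\xi_0p_j^2\sum_{\lambda\in L\setminus\{0,-p_j\}}\frac{1}{\lambda(\lambda+p_j)^2}.$$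
   Context: The function $\sigma$ above is the Weierstrass sigma-function of the lattice $L$; the product converges since $\sum_{\lambda\in L\setminus\{0\}}|\lambda|^{-3}<\infty$, and its zero set is exactly $L$. *)

theory Defs
  imports "HOL-Analysis.Analysis"
begin

definition lattice :: "complex \<Rightarrow> complex \<Rightarrow> complex set" where
  "lattice p1 p2 = {of_int m * p1 + of_int n * p2 | m n. True}"

text \<open>The (absolutely convergent)
  product over L - {0} is taken as an unconditional limit of finite partial
  products, i.e. along the net of finite subsets of L - {0}.\<close>
definition weierstrass_sigma :: "complex set \<Rightarrow> complex \<Rightarrow> complex" where
  "weierstrass_sigma L z =
     Lim (finite_subsets_at_top (L - {0}))
       (\<lambda>F. z * (\<Prod>l\<in>F. exp (z / l + z\<^sup>2 / (2 * l\<^sup>2)) * (1 - z / l)))"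

end

theory Submission
  imports Defs "HOL-Complex_Analysis.Complex_Analysis"
begin


lemma prod_net_conv:
  fixes f g :: "'a \<Rightarrow> complex"
  assumes gs: "g summable_on (I - B)" and fin: "finite B" and fg: "\<And>l. l \<in> I - B \<Longrightarrow> f l = exp (g l)"
  shows "((\<lambda>F. \<Prod>l\<in>F. f l) \<longlongrightarrow> (\<Prod>l\<in>I \<inter> B. f l) * exp (infsum g (I - B))) (finite_subsets_at_top I)"
proof -
  have t0: "(sum g \<longlongrightarrow> infsum g (I - B)) (finite_subsets_at_top (I - B))"
    using has_sum_infsum[OF gs] unfolding has_sum_def .
  have flim: "filterlim (\<lambda>F. F - B) (finite_subsets_at_top (I - B)) (finite_subsets_at_top I)"
    unfolding filterlim_finite_subsets_at_top
  proof (intro allI impI, elim conjE)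
    fix X assume X: "finite X" "X \<subseteq> I - B"
    show "\<forall>\<^sub>F y in finite_subsets_at_top I. finite (y - B) \<and> X \<subseteq> y - B \<and> y - B \<subseteq> I - B"
      unfolding eventually_finite_subsets_at_top
      by (rule exI[of _ X]) (use X in auto)
  qed
  have t1: "((\<lambda>F. sum g (F - B)) \<longlongrightarrow> infsum g (I - B)) (finite_subsets_at_top I)"
    using filterlim_compose[OF t0 flim] by (simp add: o_def)
  have ev: "\<forall>\<^sub>F F in finite_subsets_at_top I.
      (\<Prod>l\<in>I \<inter> B. f l) * exp (sum g (F - B)) = (\<Prod>l\<in>F. f l)"
    unfolding eventually_finite_subsets_at_top
  proof (rule exI[of _ "I \<inter> B"], intro conjI allI impI)
    fix Y assume Y: "finite Y \<and> I \<inter> B \<subseteq> Y \<and> Y \<subseteq> I"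
    have "(\<Prod>l\<in>Y. f l) = (\<Prod>l\<in>Y - (I \<inter> B). f l) * (\<Prod>l\<in>I \<inter> B. f l)"
      using Y by (intro prod.subset_diff) auto
    also have "Y - (I \<inter> B) = Y - B" using Y by auto
    also have "(\<Prod>l\<in>Y - B. f l) = (\<Prod>l\<in>Y - B. exp (g l))"
      using Y fg by (intro prod.cong) auto
    also have "\<dots> = exp (sum g (Y - B))" using Y by (simp add: exp_sum)
    finally show "(\<Prod>l\<in>I \<inter> B. f l) * exp (sum g (Y - B)) = (\<Prod>l\<in>Y. f l)" by simp
  qed (use fin in auto)
  have "((\<lambda>F. (\<Prod>l\<in>I \<inter> B. f l) * exp (sum g (F - B))) \<longlongrightarrow> (\<Prod>l\<in>I \<inter> B. f l) * exp (infsum g (I - B))) (finite_subsets_at_top I)"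
    by (intro tendsto_mult_left tendsto_exp t1)
  thus ?thesis by (rule Lim_transform_eventually) (rule ev)
qed

lemma prod_net_restrict:
  fixes f :: "'a \<Rightarrow> complex"
  assumes lim: "((\<lambda>F. \<Prod>l\<in>F. f l) \<longlongrightarrow> a) (finite_subsets_at_top I)"
    and JI: "J \<subseteq> I" and fin: "finite (I - J)" and nz: "(\<Prod>l\<in>I - J. f l) \<noteq> 0"
  shows "((\<lambda>F. \<Prod>l\<in>F. f l) \<longlongrightarrow> a / (\<Prod>l\<in>I - J. f l)) (finite_subsets_at_top J)"
proof -
  define c where "c = (\<Prod>l\<in>I - J. f l)"
  have flim: "filterlim (\<lambda>F. F \<union> (I - J)) (finite_subsets_at_top I) (finite_subsets_at_top J)"
    unfolding filterlim_finite_subsets_at_top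
  proof (intro allI impI, elim conjE)
    fix X assume X: "finite X" "X \<subseteq> I"
    show "\<forall>\<^sub>F y in finite_subsets_at_top J. finite (y \<union> (I - J)) \<and> X \<subseteq> y \<union> (I - J) \<and> y \<union> (I - J) \<subseteq> I"
      unfolding eventually_finite_subsets_at_top
      by (rule exI[of _ "X \<inter> J"]) (use X JI fin in auto)
  qed
  have t1: "((\<lambda>F. \<Prod>l\<in>F \<union> (I - J). f l) \<longlongrightarrow> a) (finite_subsets_at_top J)"
    using filterlim_compose[OF lim flim] by (simp add: o_def)
  have ev: "\<forall>\<^sub>F F in finite_subsets_at_top J. (\<Prod>l\<in>F \<union> (I - J). f l) / c = (\<Prod>l\<in>F. f l)"
    unfolding eventually_finite_subsets_at_top
  proof (rule exI[of _ "{}"], intro conjI allI impI)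
    fix Y assume Y: "finite Y \<and> {} \<subseteq> Y \<and> Y \<subseteq> J"
    have "(\<Prod>l\<in>Y \<union> (I - J). f l) = (\<Prod>l\<in>Y. f l) * c"
      unfolding c_def using Y fin by (intro prod.union_disjoint) auto
    thus "(\<Prod>l\<in>Y \<union> (I - J). f l) / c = (\<Prod>l\<in>Y. f l)" using nz by (simp add: c_def)
  qed auto
  have "((\<lambda>F. (\<Prod>l\<in>F \<union> (I - J). f l) / c) \<longlongrightarrow> a / c) (finite_subsets_at_top J)"
    by (intro tendsto_divide t1 tendsto_const) (use nz in \<open>simp add: c_def\<close>)
  hence "((\<lambda>F. \<Prod>l\<in>F. f l) \<longlongrightarrow> a / c) (finite_subsets_at_top J)"
    by (rule Lim_transform_eventually) (rule ev)
  thus ?thesis by (simp add: c_def)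
qed

lemma prod_net_reindex:
  fixes f :: "'b \<Rightarrow> complex"
  assumes lim: "((\<lambda>F. \<Prod>l\<in>F. f l) \<longlongrightarrow> a) (finite_subsets_at_top (h ` A))" and inj: "inj_on h A"
  shows "((\<lambda>F. \<Prod>l\<in>F. f (h l)) \<longlongrightarrow> a) (finite_subsets_at_top A)"
proof -
  have "((\<lambda>F. \<Prod>l\<in>F. f l) \<longlongrightarrow> a) (filtermap ((`) h) (finite_subsets_at_top A))"
    using lim by (simp add: filtermap_image_finite_subsets_at_top[OF inj])
  hence t: "((\<lambda>F. \<Prod>l\<in>h ` F. f l) \<longlongrightarrow> a) (finite_subsets_at_top A)"
    by (simp add: filterlim_filtermap)
  have ev: "\<forall>\<^sub>F F in finite_subsets_at_top A. (\<Prod>l\<in>h ` F. f l) = (\<Prod>l\<in>F. f (h l))"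
    unfolding eventually_finite_subsets_at_top
  proof (rule exI[of _ "{}"], intro conjI allI impI)
    fix Y assume Y: "finite Y \<and> {} \<subseteq> Y \<and> Y \<subseteq> A"
    show "(\<Prod>l\<in>h ` Y. f l) = (\<Prod>l\<in>Y. f (h l))"
      using Y by (subst prod.reindex) (auto intro: inj_on_subset[OF inj])
  qed auto
  from t show ?thesis by (rule Lim_transform_eventually) (rule ev)
qed

locale lat =
  fixes p1 p2 :: complex
  assumes indep: "\<forall>a b :: real. of_real a * p1 + of_real b * p2 = 0 \<longrightarrow> a = 0 \<and> b = 0"
begin

abbreviation "L \<equiv> lattice p1 p2"

lemma mem_L: "l \<in> L \<longleftrightarrow> (\<exists>m n::int. l = of_int m * p1 + of_int n * p2)"
  by (auto simp: lattice_def)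

lemma L_0[simp]: "0 \<in> L"
  unfolding mem_L by (rule exI[of _ 0], rule exI[of _ 0]) simp

lemma L_p1[simp]: "p1 \<in> L"
  unfolding mem_L by (rule exI[of _ 1], rule exI[of _ 0]) simp

lemma L_p2[simp]: "p2 \<in> L"
  unfolding mem_L by (rule exI[of _ 0], rule exI[of _ 1]) simp

lemma L_add: "a \<in> L \<Longrightarrow> b \<in> L \<Longrightarrow> a + b \<in> L"
  unfolding mem_L
proof (elim exE)
  fix m n m' n' :: int
  assume "a = of_int m * p1 + of_int n * p2" "b = of_int m' * p1 + of_int n' * p2"
  then show "\<exists>m n::int. a + b = of_int m * p1 + of_int n * p2"
    by (intro exI[of _ "m+m'"] exI[of _ "n+n'"]) (simp add: algebra_simps)
qed

lemma L_uminus: "a \<in> L \<Longrightarrow> - a \<in> L"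
  unfolding mem_L
proof (elim exE)
  fix m n :: int
  assume "a = of_int m * p1 + of_int n * p2"
  then show "\<exists>m n::int. - a = of_int m * p1 + of_int n * p2"
    by (intro exI[of _ "-m"] exI[of _ "-n"]) (simp add: algebra_simps)
qed

lemma L_diff: "a \<in> L \<Longrightarrow> b \<in> L \<Longrightarrow> a - b \<in> L"
  using L_add[of a "-b"] L_uminus[of b] by simp

lemma p1_nz: "p1 \<noteq> 0"
  using indep[rule_format, of 1 0] by auto

lemma p2_nz: "p2 \<noteq> 0"
  using indep[rule_format, of 0 1] by auto

definition "d = Im (cnj p1 * p2)"

lemma d_nz: "d \<noteq> 0"
proof
  assume d0: "d = 0"
  have "Im (p2 / p1) = Im (cnj p1 * p2) / (norm p1)^2"
    by (simp add: Im_divide cmod_power2 algebra_simps)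
  with d0 have "Im (p2 / p1) = 0" by (simp add: d_def)
  hence "p2 / p1 = of_real (Re (p2 / p1))" by (simp add: complex_eq_iff)
  hence "p2 = of_real (Re (p2 / p1)) * p1" using p1_nz by (simp add: field_simps)
  hence "of_real (Re (p2 / p1)) * p1 + of_real (-1) * p2 = 0" by simp
  from indep[rule_format, OF this] show False by simp
qed

definition "C = (norm p1 + norm p2) / \<bar>d\<bar>"

lemma C_pos: "C > 0"
  using d_nz p1_nz by (simp add: C_def add_pos_nonneg)

lemma lat_bound:
  "real_of_int (\<bar>m\<bar> + \<bar>n\<bar>) \<le> C * norm (of_int m * p1 + of_int n * p2)"
proof -
  define l where "l = of_int m * p1 + of_int n * p2"
  have "Im (cnj p1 * l) = of_int n * d"
    by (simp add: l_def d_def algebra_simps)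
  hence 1: "\<bar>of_int n\<bar> * \<bar>d\<bar> \<le> norm p1 * norm l"
    by (metis abs_Im_le_cmod abs_mult complex_mod_cnj norm_mult)
  have "Im (cnj p2 * l) = - of_int m * d"
    by (simp add: l_def d_def algebra_simps)
  hence 2: "\<bar>of_int m\<bar> * \<bar>d\<bar> \<le> norm p2 * norm l"
    by (metis abs_Im_le_cmod abs_minus_cancel abs_mult complex_mod_cnj mult_minus_left norm_mult)
  have "real_of_int (\<bar>m\<bar> + \<bar>n\<bar>) * \<bar>d\<bar> \<le> (norm p1 + norm p2) * norm l"
    using 1 2 by (simp add: algebra_simps)
  thus ?thesis using d_nz unfolding C_def l_def[symmetric]
    by (simp add: field_simps)
qed


definition phi :: "int \<times> int \<Rightarrow> complex" where "phi = (\<lambda>(m,n). of_int m * p1 + of_int n * p2)"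

lemma L_phi: "L = range phi"
  by (auto simp: lattice_def phi_def)

lemma inj_phi: "inj phi"
proof (rule injI)
  fix x y assume "phi x = phi y"
  obtain m n m' n' where xy: "x = (m,n)" "y = (m',n')" by (cases x, cases y) auto
  with \<open>phi x = phi y\<close> have "of_real (of_int (m - m')) * p1 + of_real (of_int (n - n')) * p2 = 0"
    by (simp add: phi_def algebra_simps)
  from indep[rule_format, OF this] show "x = y" using xy by simp
qed

lemma finite_ball: "finite {l \<in> L. norm l \<le> R}"
proof -
  define k where "k = \<lceil>C * R\<rceil>"
  have "{l \<in> L. norm l \<le> R} \<subseteq> phi ` ({-k..k} \<times> {-k..k})"
  proof
    fix l assume l: "l \<in> {l \<in> L. norm l \<le> R}"
    then obtain m n where mn: "l = phi (m,n)" by (auto simp: L_phi)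
    have "real_of_int (\<bar>m\<bar> + \<bar>n\<bar>) \<le> C * norm l"
      using lat_bound[of m n] mn by (simp add: phi_def)
    also have "\<dots> \<le> C * R" using l C_pos by (intro mult_left_mono) auto
    also have "\<dots> \<le> k" unfolding k_def by linarith
    finally have "\<bar>m\<bar> + \<bar>n\<bar> \<le> k" by linarith
    hence "(m,n) \<in> {-k..k} \<times> {-k..k}" by auto
    thus "l \<in> phi ` ({-k..k} \<times> {-k..k})" using mn by blast
  qed
  thus ?thesis by (rule finite_subset) auto
qed

lemma powr_32:
  fixes x :: real assumes p: "x > 0"
  shows "x powr (-3/2) = 1 / (x * sqrt x)"
proof -
  have "x powr (3/2) = x powr (1 + 1/2)" by simp
  also have "\<dots> = x powr 1 * x powr (1/2)" by (rule powr_add)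
  also have "\<dots> = x * sqrt x" using p by (simp add: powr_half_sqrt)
  finally have "x powr (3/2) = x * sqrt x" .
  thus ?thesis by (simp add: powr_minus_divide)
qed

definition "ff (k::int) = 1 / ((1 + real_of_int \<bar>k\<bar>) * sqrt (1 + real_of_int \<bar>k\<bar>))"

lemma ff_nonneg: "ff k \<ge> 0" by (simp add: ff_def)

lemma summable_ff: "ff summable_on UNIV"
proof -
  have s: "summable (\<lambda>n. real n powr (-3/2))"
    by (subst summable_real_powr_iff) simp
  have "summable (\<lambda>n. real (Suc n) powr (-3/2))"
    using s by (subst summable_Suc_iff)
  also have "(\<lambda>n. real (Suc n) powr (-3/2)) = (\<lambda>n::nat. 1 / ((1 + real n) * sqrt (1 + real n)))"
    by (rule ext, subst powr_32) (auto simp: add.commute)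
  finally have s2: "summable (\<lambda>n::nat. 1 / ((1 + real n) * sqrt (1 + real n)))" .
  have "(ff \<circ> int) summable_on UNIV"
    using s2 by (subst summable_on_UNIV_nonneg_real_iff) (auto simp: ff_def o_def)
  hence a: "ff summable_on range int" by (subst summable_on_reindex) auto
  have "(ff \<circ> (\<lambda>n. - int n)) summable_on UNIV"
    using s2 by (subst summable_on_UNIV_nonneg_real_iff) (auto simp: ff_def o_def)
  hence b: "ff summable_on range (\<lambda>n. - int n)" by (subst summable_on_reindex) (auto simp: inj_on_def)
  have "UNIV = range int \<union> range (\<lambda>n. - int n)"
  proof (intro set_eqI iffI)
    fix k :: int
    show "k \<in> range int \<union> range (\<lambda>n. - int n)"
    proof (cases "k \<ge> 0")
      case True thus ?thesis by (intro UnI1 image_eqI[of _ int "nat k"]) auto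
    next
      case False thus ?thesis by (intro UnI2 image_eqI[of _ "\<lambda>n. - int n" "nat (-k)"]) auto
    qed
  qed auto
  thus ?thesis using summable_on_union[OF a b] by simp
qed

lemma summable_ff2: "(\<lambda>(m,n). ff m * ff n) summable_on UNIV"
proof -
  have "(\<lambda>(m,n). ff m * ff n) summable_on Sigma UNIV (\<lambda>_. UNIV)"
  proof (rule summable_on_SigmaI)
    fix m :: int
    show "((\<lambda>n. case (m, n) of (m, n) \<Rightarrow> ff m * ff n) has_sum (ff m * infsum ff UNIV)) UNIV"
      using has_sum_cmult_right[OF has_sum_infsum[OF summable_ff], of "ff m"] by simp
  next
    show "(\<lambda>m. ff m * infsum ff UNIV) summable_on UNIV"
      by (intro summable_on_cmult_left summable_ff)
  qed (auto simp: ff_nonneg)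
  thus ?thesis by simp
qed

lemma phi_bound:
  assumes "(m,n) \<noteq> (0,0)"
  shows "1 / norm (phi (m,n)) ^ 3 \<le> 8 * C^3 * (ff m * ff n)"
proof -
  define s where "s = real_of_int (\<bar>m\<bar> + \<bar>n\<bar>)"
  define N where "N = norm (phi (m,n))"
  have s1: "s \<ge> 1" using assms unfolding s_def by auto
  have sl: "s \<le> C * N" using lat_bound[of m n] by (simp add: s_def phi_def N_def)
  have Cp: "C > 0" by (rule C_pos)
  have N0: "N \<ge> 0" by (simp add: N_def)
  have s3: "s^3 \<le> (C * N)^3" using sl s1 by (intro power_mono) auto
  have A: "1 / N ^ 3 \<le> C^3 / s^3"
  proof -
    have "1 / N^3 = C^3 / (C * N)^3" using Cp by (simp add: power_mult_distrib)
    also have "\<dots> \<le> C^3 / s^3"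
      by (rule frac_le) (use Cp s1 s3 in auto)
    finally show ?thesis .
  qed
  have B: "ff m * ff n \<ge> 1 / (8 * s^3)"
  proof -
    define x where "x = 1 + real_of_int \<bar>m\<bar>"
    define y where "y = 1 + real_of_int \<bar>n\<bar>"
    have x: "1 \<le> x" "x \<le> 2 * s" using s1 by (auto simp: x_def s_def)
    have y: "1 \<le> y" "y \<le> 2 * s" using s1 by (auto simp: y_def s_def)
    have hx: "x * sqrt x \<le> 2 * s * sqrt (2 * s)" using x by (intro mult_mono) auto
    have hy: "y * sqrt y \<le> 2 * s * sqrt (2 * s)" using y by (intro mult_mono) auto
    have "(x * sqrt x) * (y * sqrt y) \<le> (2 * s * sqrt (2 * s)) * (2 * s * sqrt (2 * s))"
      using hx hy x y by (intro mult_mono) auto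
    also have "\<dots> = (2 * s)\<^sup>2 * (sqrt (2 * s))\<^sup>2" by (simp add: power2_eq_square algebra_simps)
    also have "\<dots> = 8 * s^3" using s1 by (simp add: power2_eq_square power3_eq_cube)
    finally have le: "(x * sqrt x) * (y * sqrt y) \<le> 8 * s^3" .
    have pos: "0 < (x * sqrt x) * (y * sqrt y)" using x y by simp
    have "ff m * ff n = 1 / ((x * sqrt x) * (y * sqrt y))" by (simp add: ff_def x_def y_def)
    also have "\<dots> \<ge> 1 / (8 * s^3)" by (rule frac_le) (use le pos in auto)
    finally show ?thesis .
  qed
  have "C^3 / s^3 = 8 * C^3 * (1 / (8 * s^3))" using s1 by simp
  also have "\<dots> \<le> 8 * C^3 * (ff m * ff n)" using B Cp by (intro mult_left_mono) auto
  finally show ?thesis using A unfolding N_def by simp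
qed

lemma summable_inv_cube: "(\<lambda>l. 1 / norm l ^ 3) summable_on (L - {0})"
proof -
  have z: "phi x = 0 \<longleftrightarrow> x = (0,0)" for x
    using injD[OF inj_phi, of x "(0,0)"] by (auto simp: phi_def)
  have eq: "L - {0} = phi ` (UNIV - {(0,0)})"
    by (auto simp: L_phi z)
  have "((\<lambda>l. 1 / norm l ^ 3) \<circ> phi) summable_on (UNIV - {(0,0)})"
  proof (rule summable_on_comparison_test)
    show "(\<lambda>x. 8 * C^3 * (case x of (m,n) \<Rightarrow> ff m * ff n)) summable_on (UNIV - {(0,0)})"
      by (intro summable_on_cmult_right summable_on_subset[OF summable_ff2]) auto
  qed (auto intro!: phi_bound)
  thus ?thesis unfolding eq using inj_phi by (subst summable_on_reindex) (auto intro: inj_on_subset)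
qed

lemma summable_lattice:
  fixes g :: "complex \<Rightarrow> complex"
  assumes "A \<subseteq> L - {0}" "finite B" "\<And>l. l \<in> A - B \<Longrightarrow> norm (g l) \<le> K / norm l ^ 3"
  shows "g summable_on A"
proof -
  have "(\<lambda>l. K * (1 / norm l ^ 3)) summable_on (A - B)"
    by (intro summable_on_cmult_right summable_on_subset[OF summable_inv_cube]) (use assms in auto)
  hence "(\<lambda>l. norm (g l)) summable_on (A - B)"
  proof (rule Infinite_Sum.abs_summable_on_comparison_test')
    fix l assume "l \<in> A - B"
    from assms(3)[OF this] show "norm (g l) \<le> K * (1 / norm l ^ 3)" by simp
  qed
  hence 1: "g summable_on (A - B)" by (rule abs_summable_summable)
  have 2: "g summable_on (A \<inter> B)" using assms by simp
  have "(A - B) \<union> (A \<inter> B) = A" by blast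
  with summable_on_union[OF 1 2] show ?thesis by (simp only:)
qed

end


definition E :: "complex \<Rightarrow> complex \<Rightarrow> complex" where
  "E z l = exp (z / l + z\<^sup>2 / (2 * l\<^sup>2)) * (1 - z / l)"

lemma E_wf: "E z l = weierstrass_factor 2 (z / l)"
  by (simp add: E_def weierstrass_factor_def numeral_2_eq_2 power_divide field_simps)

lemma E_eq_0: "l \<noteq> 0 \<Longrightarrow> E z l = 0 \<longleftrightarrow> z = l"
  by (auto simp: E_def field_simps)

lemma E_bound:
  assumes "norm l \<ge> 2 * norm z + 1"
  shows "norm (E z l - 1) \<le> 3 * norm z ^ 3 / norm l ^ 3" "norm (E z l - 1) < 1/2"
proof -
  have l0: "norm l > 0" using assms by (smt (verit) norm_ge_zero)
  have u: "norm (z / l) \<le> 1/2" using assms l0 by (simp add: norm_divide field_simps)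
  have u': "norm (z / l) < 1/2" using assms l0 by (simp add: norm_divide field_simps)
  have "norm (E z l - 1) \<le> 3 * norm (z / l) ^ Suc 2"
    unfolding E_wf by (rule weierstrass_factor_bound[OF u])
  also have "\<dots> = 3 * norm z ^ 3 / norm l ^ 3" by (simp add: norm_divide power_divide)
  finally show 1: "norm (E z l - 1) \<le> 3 * norm z ^ 3 / norm l ^ 3" .
  have "norm (z / l) ^ 3 \<le> (1/2) ^ 3" using u by (intro power_mono) auto
  hence "3 * norm (z / l) ^ Suc 2 \<le> 3 / 8" by (simp add: power_divide)
  with \<open>norm (E z l - 1) \<le> 3 * norm (z / l) ^ Suc 2\<close> show "norm (E z l - 1) < 1/2" by simp
qed

lemma Ln_E_bound:
  assumes "norm l \<ge> 2 * norm z + 1"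
  shows "norm (Ln (E z l)) \<le> 6 * norm z ^ 3 / norm l ^ 3"
proof -
  have "norm (Ln (1 + (E z l - 1))) \<le> 2 * norm (E z l - 1)"
    by (rule norm_Ln_le) (use E_bound(2)[OF assms] in simp)
  also have "\<dots> \<le> 2 * (3 * norm z ^ 3 / norm l ^ 3)"
    using E_bound(1)[OF assms] by simp
  finally show ?thesis by simp
qed

context lat begin

lemma sigma_net:
  "\<exists>a. ((\<lambda>F. \<Prod>l\<in>F. E z l) \<longlongrightarrow> a) (finite_subsets_at_top (L - {0})) \<and> (z \<notin> L \<longrightarrow> a \<noteq> 0)"
proof -
  define B where "B = {l \<in> L. norm l \<le> 2 * norm z + 1}"
  have finB: "finite B" unfolding B_def by (rule finite_ball)
  have far: "2 * norm z + 1 \<le> norm l" if "l \<in> L - {0} - B" for l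
    using that by (auto simp: B_def)
  have Enz: "E z l \<noteq> 0" if "l \<in> L - {0} - B" for l
  proof
    assume "E z l = 0"
    hence "norm (E z l - 1) = 1" by simp
    with E_bound(2)[OF far[OF that]] show False by simp
  qed
  have gs: "(\<lambda>l. Ln (E z l)) summable_on (L - {0} - B)"
  proof (rule summable_lattice[where B="{}" and K="6 * norm z ^ 3"])
    fix l assume "l \<in> L - {0} - B - {}"
    thus "norm (Ln (E z l)) \<le> 6 * norm z ^ 3 / norm l ^ 3"
      using Ln_E_bound far by auto
  qed auto
  have lim: "((\<lambda>F. \<Prod>l\<in>F. E z l) \<longlongrightarrow> (\<Prod>l\<in>(L - {0}) \<inter> B. E z l) * exp (infsum (\<lambda>l. Ln (E z l)) (L - {0} - B)))
      (finite_subsets_at_top (L - {0}))"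
    by (rule prod_net_conv[OF gs finB]) (use Enz in simp)
  show ?thesis
  proof (intro exI conjI impI, rule lim)
    assume z: "z \<notin> L"
    have "(\<Prod>l\<in>(L - {0}) \<inter> B. E z l) \<noteq> 0"
      using z finB by (subst prod_zero_iff) (auto simp: E_eq_0)
    thus "(\<Prod>l\<in>(L - {0}) \<inter> B. E z l) * exp (infsum (\<lambda>l. Ln (E z l)) (L - {0} - B)) \<noteq> 0" by simp
  qed
qed

definition "aa z = Lim (finite_subsets_at_top (L - {0})) (\<lambda>F. \<Prod>l\<in>F. E z l)"

lemma aa_lim: "((\<lambda>F. \<Prod>l\<in>F. E z l) \<longlongrightarrow> aa z) (finite_subsets_at_top (L - {0}))"
proof -
  obtain a where a: "((\<lambda>F. \<Prod>l\<in>F. E z l) \<longlongrightarrow> a) (finite_subsets_at_top (L - {0}))"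
    using sigma_net by blast
  have "aa z = a" unfolding aa_def by (rule tendsto_Lim[OF _ a]) simp
  with a show ?thesis by simp
qed

lemma aa_nz: "z \<notin> L \<Longrightarrow> aa z \<noteq> 0"
proof -
  assume z: "z \<notin> L"
  obtain a where a: "((\<lambda>F. \<Prod>l\<in>F. E z l) \<longlongrightarrow> a) (finite_subsets_at_top (L - {0}))" "a \<noteq> 0"
    using sigma_net z by blast
  have "aa z = a" unfolding aa_def by (rule tendsto_Lim[OF _ a(1)]) simp
  with a show ?thesis by simp
qed

lemma sigma_eq: "weierstrass_sigma L z = z * aa z"
proof -
  have "((\<lambda>F. z * (\<Prod>l\<in>F. exp (z / l + z\<^sup>2 / (2 * l\<^sup>2)) * (1 - z / l))) \<longlongrightarrow> z * aa z)
          (finite_subsets_at_top (L - {0}))"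
    using tendsto_mult_left[OF aa_lim, of z] by (simp add: E_def)
  thus ?thesis unfolding weierstrass_sigma_def by (rule tendsto_Lim[rotated]) simp
qed

lemma sigma_zero: "z \<in> L \<Longrightarrow> weierstrass_sigma L z = 0"
proof (cases "z = 0")
  case False
  assume z: "z \<in> L"
  have ev: "\<forall>\<^sub>F F in finite_subsets_at_top (L - {0}). 0 = (\<Prod>l\<in>F. E z l)"
    unfolding eventually_finite_subsets_at_top
  proof (rule exI[of _ "{z}"], intro conjI allI impI)
    fix Y assume Y: "finite Y \<and> {z} \<subseteq> Y \<and> Y \<subseteq> L - {0}"
    have "E z z = 0" using False by (simp add: E_def)
    with Y show "0 = (\<Prod>l\<in>Y. E z l)" by (metis prod_zero insert_subset)
  qed (use z False in auto)
  have "((\<lambda>F. \<Prod>l\<in>F. E z l) \<longlongrightarrow> 0) (finite_subsets_at_top (L - {0}))"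
    by (rule Lim_transform_eventually[OF tendsto_const ev])
  hence "aa z = 0" using aa_lim tendsto_unique finite_subsets_at_top_neq_bot by metis
  thus ?thesis by (simp add: sigma_eq)
qed (simp add: sigma_eq)

lemma sigma_nz: "z \<notin> L \<Longrightarrow> weierstrass_sigma L z \<noteq> 0"
  using aa_nz[of z] by (auto simp: sigma_eq)


lemma L_shift: "p \<in> L \<Longrightarrow> L - {0} = (\<lambda>m. m + p) ` (L - {- p})"
proof (intro set_eqI iffI)
  fix l assume p: "p \<in> L" and l: "l \<in> L - {0}"
  have "l - p \<in> L - {- p}" using l p L_diff by auto
  moreover have "l = (l - p) + p" by simp
  ultimately show "l \<in> (\<lambda>m. m + p) ` (L - {- p})" by blast
next
  fix l assume p: "p \<in> L" and "l \<in> (\<lambda>m. m + p) ` (L - {- p})"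
  then obtain m where "m \<in> L" "m \<noteq> - p" "l = m + p" by auto
  thus "l \<in> L - {0}" using p L_add by (auto simp: add_eq_0_iff)
qed

lemma notin_shift: "p \<in> L \<Longrightarrow> z \<notin> L \<Longrightarrow> z + p \<notin> L"
  using L_diff[of "z + p" p] by auto

lemma c_lim:
  assumes p: "p \<in> L" "p \<noteq> 0" and z: "z \<notin> L"
  shows "((\<lambda>F. \<Prod>m\<in>F. E (z + p) (m + p) / E z m) \<longlongrightarrow> (aa (z + p) / E (z + p) p) / (aa z / E z (- p)))
           (finite_subsets_at_top (L - {0, - p}))"
proof -
  have zp: "z + p \<notin> L" using notin_shift[OF p(1) z] .
  have mp: "- p \<in> L" using L_uminus[OF p(1)] .
  have z0: "z \<noteq> 0" "z \<noteq> - p" using z mp by auto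
  have e1: "(L - {0}) - (L - {0, - p}) = {- p}" using mp p(2) by auto
  have e2: "(L - {- p}) - (L - {0, - p}) = {0}" using p(2) by auto
  have Ez: "E z (- p) \<noteq> 0" using z0 p(2) by (simp add: E_eq_0)
  have Ezp: "E (z + p) p \<noteq> 0" using z0 p(2) by (simp add: E_eq_0)
  have t1: "((\<lambda>F. \<Prod>l\<in>F. E z l) \<longlongrightarrow> aa z / E z (- p)) (finite_subsets_at_top (L - {0, - p}))"
    using prod_net_restrict[OF aa_lim[of z], of "L - {0, - p}"] e1 Ez by auto
  have "((\<lambda>F. \<Prod>l\<in>F. E (z + p) l) \<longlongrightarrow> aa (z + p)) (finite_subsets_at_top ((\<lambda>m. m + p) ` (L - {- p})))"
    using aa_lim[of "z + p"] L_shift[OF p(1)] by simp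
  hence "((\<lambda>F. \<Prod>m\<in>F. E (z + p) (m + p)) \<longlongrightarrow> aa (z + p)) (finite_subsets_at_top (L - {- p}))"
    by (rule prod_net_reindex) (auto simp: inj_on_def)
  hence t2: "((\<lambda>F. \<Prod>m\<in>F. E (z + p) (m + p)) \<longlongrightarrow> aa (z + p) / E (z + p) p) (finite_subsets_at_top (L - {0, - p}))"
    using prod_net_restrict[of "\<lambda>m. E (z + p) (m + p)" "aa (z + p)" "L - {- p}" "L - {0, - p}"] e2 Ezp by auto
  have "((\<lambda>F. (\<Prod>m\<in>F. E (z + p) (m + p)) / (\<Prod>l\<in>F. E z l)) \<longlongrightarrow> (aa (z + p) / E (z + p) p) / (aa z / E z (- p)))
           (finite_subsets_at_top (L - {0, - p}))"
    by (rule tendsto_divide[OF t2 t1]) (use aa_nz[OF z] Ez in simp)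
  thus ?thesis by (simp add: prod_dividef)
qed

definition "cc p z = (aa (z + p) / E (z + p) p) / (aa z / E z (- p))"

lemma ratio_aux:
  fixes m q z :: complex
  assumes "m \<noteq> 0" "q \<noteq> 0" "m \<noteq> z"
  shows "(1 - (z + (q - m)) / q) / (1 - z / m) = m / q"
proof -
  have mz: "m - z \<noteq> 0" using assms by simp
  have a: "1 - (z + (q - m)) / q = (m - z) / q" using assms by (simp add: field_simps)
  have b: "1 - z / m = (m - z) / m" using assms by (simp add: field_simps)
  show ?thesis unfolding a b using assms mz by (simp add: field_simps)
qed

lemma E_ratio:
  assumes "m \<noteq> 0" "m + p \<noteq> 0" "m \<noteq> z"
  shows "E (z + p) (m + p) / E z m =
     exp ((z + p) / (m + p) + (z + p)\<^sup>2 / (2 * (m + p)\<^sup>2) - (z / m + z\<^sup>2 / (2 * m\<^sup>2))) * (m / (m + p))"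
proof -
  have r: "(1 - (z + p) / (m + p)) / (1 - z / m) = m / (m + p)"
    using ratio_aux[of m "m + p" z] assms by simp
  have "E (z + p) (m + p) / E z m = (exp ((z + p) / (m + p) + (z + p)\<^sup>2 / (2 * (m + p)\<^sup>2)) / exp (z / m + z\<^sup>2 / (2 * m\<^sup>2)))
      * ((1 - (z + p) / (m + p)) / (1 - z / m))"
    unfolding E_def by (simp only: times_divide_times_eq)
  thus ?thesis unfolding r exp_diff .
qed

lemma hd_aux:
  fixes z w m q :: complex
  assumes "m \<noteq> 0" "q \<noteq> 0"
  shows "((z + (q - m)) / q + (z + (q - m))\<^sup>2 / (2 * q\<^sup>2) - (z / m + z\<^sup>2 / (2 * m\<^sup>2)))
       - ((w + (q - m)) / q + (w + (q - m))\<^sup>2 / (2 * q\<^sup>2) - (w / m + w\<^sup>2 / (2 * m\<^sup>2)))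
       = - (z - w) * (q - m)\<^sup>2 * (1 / (m * q\<^sup>2)) + ((z\<^sup>2 - w\<^sup>2) / 2) * (1 / q\<^sup>2 - 1 / m\<^sup>2)"
  using assms by (simp add: field_simps power2_eq_square)

lemma hd_identity:
  fixes z w m p :: complex
  assumes "m \<noteq> 0" "m + p \<noteq> 0"
  shows "((z + p) / (m + p) + (z + p)\<^sup>2 / (2 * (m + p)\<^sup>2) - (z / m + z\<^sup>2 / (2 * m\<^sup>2)))
       - ((w + p) / (m + p) + (w + p)\<^sup>2 / (2 * (m + p)\<^sup>2) - (w / m + w\<^sup>2 / (2 * m\<^sup>2)))
       = - (z - w) * p\<^sup>2 * (1 / (m * (m + p)\<^sup>2)) + ((z\<^sup>2 - w\<^sup>2) / 2) * (1 / (m + p)\<^sup>2 - 1 / m\<^sup>2)"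
  using hd_aux[of m "m + p" z w] assms by simp


lemma far_norm:
  fixes m p :: complex
  assumes "norm m \<ge> 2 * norm p + 1"
  shows "norm (m + p) \<ge> norm m / 2" "norm m > 0" "norm p \<le> norm m"
proof -
  have "norm m - norm p \<le> norm (m + p)" using norm_diff_ineq[of m p] by simp
  thus "norm (m + p) \<ge> norm m / 2" using assms by simp
  show "norm m > 0" using assms by (smt (verit) norm_ge_zero)
  show "norm p \<le> norm m" using assms norm_ge_zero[of p] by linarith
qed

lemma s_bound:
  fixes m p :: complex
  assumes "norm m \<ge> 2 * norm p + 1"
  shows "norm (1 / (m * (m + p)\<^sup>2)) \<le> 4 / norm m ^ 3"
proof -
  note f = far_norm[OF assms]
  define N where "N = norm m"
  define Q where "Q = norm (m + p)"
  have N: "N > 0" and Q: "Q \<ge> N / 2" using f by (auto simp: N_def Q_def)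
  have "norm (1 / (m * (m + p)\<^sup>2)) = 1 / (N * Q\<^sup>2)"
    by (simp add: N_def Q_def norm_divide norm_mult norm_power)
  also have "\<dots> \<le> 1 / (N * (N / 2)\<^sup>2)"
    by (rule frac_le) (use N Q in \<open>auto intro!: mult_left_mono power_mono\<close>)
  also have "\<dots> = 4 / N ^ 3" using N by (simp add: field_simps power2_eq_square power3_eq_cube)
  finally show ?thesis by (simp add: N_def)
qed

lemma t_identity:
  fixes m p :: complex
  assumes "m \<noteq> 0" "m + p \<noteq> 0"
  shows "1 / (m + p)\<^sup>2 - 1 / m\<^sup>2 = - p * (2 * m + p) / (m\<^sup>2 * (m + p)\<^sup>2)"
proof -
  have "\<And>q. q \<noteq> 0 \<Longrightarrow> 1 / q\<^sup>2 - 1 / m\<^sup>2 = - (q - m) * (2 * m + (q - m)) / (m\<^sup>2 * q\<^sup>2)"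
    using assms by (simp add: field_simps power2_eq_square)
  from this[of "m + p"] assms show ?thesis by simp
qed

lemma t_bound:
  fixes m p :: complex
  assumes "norm m \<ge> 2 * norm p + 1"
  shows "norm (1 / (m + p)\<^sup>2 - 1 / m\<^sup>2) \<le> 12 * norm p / norm m ^ 3"
proof -
  note f = far_norm[OF assms]
  define N where "N = norm m"
  define Q where "Q = norm (m + p)"
  define P where "P = norm p"
  have N: "N > 0" and Q: "Q \<ge> N / 2" and PN: "P \<le> N" using f by (auto simp: N_def Q_def P_def)
  have m0: "m \<noteq> 0" "m + p \<noteq> 0" using f by auto
  have n2: "norm (2 * m + p) \<le> 3 * N"
    using norm_triangle_ineq[of "2 * m" p] PN by (simp add: N_def P_def)
  have "norm (1 / (m + p)\<^sup>2 - 1 / m\<^sup>2) = P * norm (2 * m + p) / (N\<^sup>2 * Q\<^sup>2)"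
    by (simp add: t_identity[OF m0] N_def Q_def P_def norm_divide norm_mult norm_power)
  also have "\<dots> \<le> (P * (3 * N)) / (N\<^sup>2 * (N / 2)\<^sup>2)"
    by (rule frac_le) (use N Q n2 in \<open>auto simp: P_def intro!: mult_left_mono power_mono mult_nonneg_nonneg\<close>)
  also have "\<dots> = 12 * P / N ^ 3" using N by (simp add: field_simps power2_eq_square power3_eq_cube)
  finally show ?thesis by (simp add: N_def P_def)
qed

lemma s_summable: "(\<lambda>m. 1 / (m * (m + p)\<^sup>2)) summable_on (L - {0, - p})"
proof (rule summable_lattice[where B="{l \<in> L. norm l \<le> 2 * norm p + 1}" and K=4])
  fix l assume "l \<in> L - {0, - p} - {l \<in> L. norm l \<le> 2 * norm p + 1}"
  thus "norm (1 / (l * (l + p)\<^sup>2)) \<le> 4 / norm l ^ 3" by (intro s_bound) auto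
qed (auto intro: finite_ball)


lemma t_summable: "(\<lambda>m. 1 / (m + p)\<^sup>2 - 1 / m\<^sup>2) summable_on (L - {0, - p})"
proof (rule summable_lattice[where B="{l \<in> L. norm l \<le> 2 * norm p + 1}" and K="12 * norm p"])
  fix l assume "l \<in> L - {0, - p} - {l \<in> L. norm l \<le> 2 * norm p + 1}"
  thus "norm (1 / (l + p)\<^sup>2 - 1 / l\<^sup>2) \<le> 12 * norm p / norm l ^ 3" by (intro t_bound) auto
qed (auto intro: finite_ball)

lemma T_zero:
  assumes p: "p \<in> L"
  shows "infsum (\<lambda>m. 1 / (m + p)\<^sup>2 - 1 / m\<^sup>2) (L - {0, - p}) = 0"
proof -
  define M where "M = L - {0, - p}"
  define t where "t = (\<lambda>m::complex. 1 / (m + p)\<^sup>2 - 1 / m\<^sup>2)"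
  define g where "g = (\<lambda>m::complex. - m - p)"
  have gM: "g m \<in> M" if "m \<in> M" for m
  proof -
    have "- m - p \<in> L" using that p L_diff L_uminus by (auto simp: M_def)
    moreover have "- m - p \<noteq> 0" "- m - p \<noteq> - p" using that by (auto simp: M_def add_eq_0_iff)
    ultimately show ?thesis by (simp add: M_def g_def)
  qed
  have bij: "bij_betw g M M"
    by (rule bij_betw_byWitness[where f'=g]) (use gM[unfolded g_def] in \<open>auto simp: g_def\<close>)
  have tg: "t (g m) = - t m" for m
  proof -
    have "(- m - p + p) = - m" by simp
    moreover have "(- m - p)\<^sup>2 = (m + p)\<^sup>2" by (simp add: power2_eq_square algebra_simps)
    ultimately show ?thesis by (simp add: t_def g_def)
  qed
  have "infsum (\<lambda>m. t (g m)) M = infsum t M" by (rule infsum_reindex_bij_betw[OF bij])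
  hence "infsum (\<lambda>m. - t m) M = infsum t M" by (simp add: tg)
  hence "- infsum t M = infsum t M" by (simp add: infsum_uminus)
  hence "infsum t M = 0" by simp
  thus ?thesis by (simp add: t_def M_def)
qed


lemma cc_rel:
  assumes p: "p \<in> L" "p \<noteq> 0" and z: "z \<notin> L" and w: "w \<notin> L"
  shows "cc p z = cc p w * exp (- (z - w) * p\<^sup>2 * infsum (\<lambda>m. 1 / (m * (m + p)\<^sup>2)) (L - {0, - p}))"
proof -
  define M where "M = L - {0, - p}"
  define s where "s = (\<lambda>m::complex. 1 / (m * (m + p)\<^sup>2))"
  define t where "t = (\<lambda>m::complex. 1 / (m + p)\<^sup>2 - 1 / m\<^sup>2)"
  define hd where "hd = (\<lambda>m. - (z - w) * p\<^sup>2 * s m + ((z\<^sup>2 - w\<^sup>2) / 2) * t m)"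
  define r where "r = (\<lambda>x m. E (x + p) (m + p) / E x m)"
  have ss: "s summable_on M" using s_summable unfolding s_def M_def .
  have ts: "t summable_on M" using t_summable unfolding t_def M_def .
  have T0: "infsum t M = 0" using T_zero[OF p(1)] unfolding t_def M_def .
  have hs: "(hd has_sum (- (z - w) * p\<^sup>2 * infsum s M)) M"
  proof -
    have "(hd has_sum (- (z - w) * p\<^sup>2 * infsum s M + ((z\<^sup>2 - w\<^sup>2) / 2) * infsum t M)) M"
      unfolding hd_def
      by (intro has_sum_add has_sum_cmult_right has_sum_infsum ss ts)
    thus ?thesis by (simp add: T0)
  qed
  have rr: "r z m = r w m * exp (hd m)" if m: "m \<in> M" for m
  proof -
    have m0: "m \<noteq> 0" "m + p \<noteq> 0" "m \<noteq> z" "m \<noteq> w" using m z w by (auto simp: M_def add_eq_0_iff)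
    have "r z m = exp ((z + p) / (m + p) + (z + p)\<^sup>2 / (2 * (m + p)\<^sup>2) - (z / m + z\<^sup>2 / (2 * m\<^sup>2))) * (m / (m + p))"
      unfolding r_def by (rule E_ratio) (use m0 in auto)
    also have "(z + p) / (m + p) + (z + p)\<^sup>2 / (2 * (m + p)\<^sup>2) - (z / m + z\<^sup>2 / (2 * m\<^sup>2))
        = ((w + p) / (m + p) + (w + p)\<^sup>2 / (2 * (m + p)\<^sup>2) - (w / m + w\<^sup>2 / (2 * m\<^sup>2))) + hd m"
      using hd_identity[OF m0(1,2), of z w] unfolding hd_def s_def t_def by (simp add: algebra_simps)
    also have "exp \<dots> * (m / (m + p)) = (exp ((w + p) / (m + p) + (w + p)\<^sup>2 / (2 * (m + p)\<^sup>2) - (w / m + w\<^sup>2 / (2 * m\<^sup>2))) * (m / (m + p))) * exp (hd m)"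
      by (simp add: exp_add)
    also have "exp ((w + p) / (m + p) + (w + p)\<^sup>2 / (2 * (m + p)\<^sup>2) - (w / m + w\<^sup>2 / (2 * m\<^sup>2))) * (m / (m + p)) = r w m"
      unfolding r_def by (rule E_ratio[symmetric]) (use m0 in auto)
    finally show ?thesis .
  qed
  have lz: "((\<lambda>F. \<Prod>m\<in>F. r z m) \<longlongrightarrow> cc p z) (finite_subsets_at_top M)"
    using c_lim[OF p z] unfolding r_def cc_def M_def .
  have lw: "((\<lambda>F. \<Prod>m\<in>F. r w m) \<longlongrightarrow> cc p w) (finite_subsets_at_top M)"
    using c_lim[OF p w] unfolding r_def cc_def M_def .
  have le: "((\<lambda>F. exp (sum hd F)) \<longlongrightarrow> exp (- (z - w) * p\<^sup>2 * infsum s M)) (finite_subsets_at_top M)"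
    using hs unfolding has_sum_def by (intro tendsto_exp)
  have l2: "((\<lambda>F. (\<Prod>m\<in>F. r w m) * exp (sum hd F)) \<longlongrightarrow> cc p w * exp (- (z - w) * p\<^sup>2 * infsum s M)) (finite_subsets_at_top M)"
    by (intro tendsto_mult lw le)
  have ev: "\<forall>\<^sub>F F in finite_subsets_at_top M. (\<Prod>m\<in>F. r w m) * exp (sum hd F) = (\<Prod>m\<in>F. r z m)"
    unfolding eventually_finite_subsets_at_top
  proof (rule exI[of _ "{}"], intro conjI allI impI)
    fix Y assume Y: "finite Y \<and> {} \<subseteq> Y \<and> Y \<subseteq> M"
    have "(\<Prod>m\<in>Y. r z m) = (\<Prod>m\<in>Y. r w m * exp (hd m))" using Y rr by (intro prod.cong) auto
    also have "\<dots> = (\<Prod>m\<in>Y. r w m) * exp (sum hd Y)" using Y by (simp add: prod.distrib exp_sum)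
    finally show "(\<Prod>m\<in>Y. r w m) * exp (sum hd Y) = (\<Prod>m\<in>Y. r z m)" by simp
  qed auto
  have l3: "((\<lambda>F. \<Prod>m\<in>F. r z m) \<longlongrightarrow> cc p w * exp (- (z - w) * p\<^sup>2 * infsum s M)) (finite_subsets_at_top M)"
    by (rule Lim_transform_eventually[OF l2 ev])
  have "cc p z = cc p w * exp (- (z - w) * p\<^sup>2 * infsum s M)"
    using tendsto_unique[OF _ lz l3] by simp
  thus ?thesis by (simp add: s_def M_def)
qed


lemma shift_aux:
  fixes q z p ex ey A0 A1 :: complex
  assumes "q \<noteq> 0" "z \<noteq> 0" "p \<noteq> 0" "ex \<noteq> 0" "ey \<noteq> 0" "A0 \<noteq> 0"
  shows "q * A1 = - (ex / ey) * ((A1 / (ex * (- z / p))) / (A0 / (ey * (q / p)))) * (z * A0)"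
  using assms by (simp add: field_simps)

lemma sigma_shift:
  assumes p: "p \<in> L" "p \<noteq> 0" and z: "z \<notin> L"
  shows "weierstrass_sigma L (z + p) = - exp (3/2 + 3 * z / p) * cc p z * weierstrass_sigma L z"
proof -
  have zp: "z + p \<noteq> 0" "z \<noteq> 0" using z p L_uminus[of p] by (auto simp: add_eq_0_iff)
  define X where "X = (z + p) / p + (z + p)\<^sup>2 / (2 * p\<^sup>2)"
  define Y where "Y = z / (- p) + z\<^sup>2 / (2 * (- p)\<^sup>2)"
  have E1: "E (z + p) p = exp X * (- z / p)"
    unfolding E_def X_def using p by (simp add: field_simps)
  have E2: "E z (- p) = exp Y * ((z + p) / p)"
    unfolding E_def Y_def using p by (simp add: field_simps)
  have XY: "X - Y = 3/2 + 3 * z / p"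
    unfolding X_def Y_def using p by (simp add: field_simps power2_eq_square)
  have "weierstrass_sigma L (z + p) = (z + p) * aa (z + p)" by (rule sigma_eq)
  also have "\<dots> = - (exp X / exp Y) * ((aa (z + p) / (exp X * (- z / p))) / (aa z / (exp Y * ((z + p) / p)))) * (z * aa z)"
    by (rule shift_aux) (use zp p aa_nz[OF z] in auto)
  also have "\<dots> = - exp (3/2 + 3 * z / p) * cc p z * weierstrass_sigma L z"
    unfolding cc_def sigma_eq E1 E2 exp_diff[symmetric] XY ..
  finally show ?thesis .
qed

lemma main_loc:
  assumes p: "p \<in> L" "p \<noteq> 0"
    and nz: "weierstrass_sigma L w \<noteq> 0" "weierstrass_sigma L (z + p) \<noteq> 0"
  shows "weierstrass_sigma L z / weierstrass_sigma L w * (weierstrass_sigma L (w + p) / weierstrass_sigma L (z + p))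
         = exp (- 3 * (z - w) / p + (z - w) * p\<^sup>2 * infsum (\<lambda>m. 1 / (m * (m + p)\<^sup>2)) (L - {0, - p}))"
proof -
  define S where "S = infsum (\<lambda>m. 1 / (m * (m + p)\<^sup>2)) (L - {0, - p})"
  define \<sigma> where "\<sigma> = weierstrass_sigma L"
  have w: "w \<notin> L" using nz(1) sigma_zero by blast
  have z: "z \<notin> L" using nz(2) sigma_zero L_add[OF _ p(1)] by blast
  have sz: "\<sigma> z \<noteq> 0" "\<sigma> w \<noteq> 0" using sigma_nz z w by (auto simp: \<sigma>_def)
  have shz: "\<sigma> (z + p) = - exp (3/2 + 3 * z / p) * cc p z * \<sigma> z" using sigma_shift[OF p z] by (simp add: \<sigma>_def)
  have shw: "\<sigma> (w + p) = - exp (3/2 + 3 * w / p) * cc p w * \<sigma> w" using sigma_shift[OF p w] by (simp add: \<sigma>_def)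
  have rel: "cc p z = cc p w * exp (- (z - w) * p\<^sup>2 * S)" using cc_rel[OF p z w] by (simp add: S_def)
  have cz: "cc p z \<noteq> 0" using nz(2) shz by (auto simp: \<sigma>_def)
  have cw: "cc p w \<noteq> 0" using cz rel by auto
  have "\<sigma> z / \<sigma> w * (\<sigma> (w + p) / \<sigma> (z + p)) = (exp (3/2 + 3 * w / p) * cc p w) / (exp (3/2 + 3 * z / p) * cc p z)"
    unfolding shz shw using sz cz by (simp add: field_simps)
  also have "\<dots> = (exp (3/2 + 3 * w / p) / exp (3/2 + 3 * z / p)) / exp (- (z - w) * p\<^sup>2 * S)"
    unfolding rel using cw by (simp add: field_simps)
  also have "\<dots> = exp ((3/2 + 3 * w / p) - (3/2 + 3 * z / p) - (- (z - w) * p\<^sup>2 * S))"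
    by (simp only: exp_diff)
  also have "(3/2 + 3 * w / p) - (3/2 + 3 * z / p) - (- (z - w) * p\<^sup>2 * S) = - 3 * (z - w) / p + (z - w) * p\<^sup>2 * S"
    using p(2) by (simp add: field_simps)
  finally show ?thesis by (simp add: \<sigma>_def S_def)
qed

end

theorem mainTheorem1:
  fixes p :: "nat \<Rightarrow> complex" and \<xi>0 :: complex and j :: nat
  assumes indep: "\<forall>a b :: real. of_real a * p 1 + of_real b * p 2 = 0 \<longrightarrow> a = 0 \<and> b = 0"
    and j: "j \<in> {1, 2}"
  defines "L \<equiv> lattice (p 1) (p 2)"
  defines "\<sigma> \<equiv> weierstrass_sigma L"
  defines "v \<equiv> - 3 * \<xi>0 / p j
               + \<xi>0 * (p j)\<^sup>2 * infsum (\<lambda>l. 1 / (l * (l + p j)\<^sup>2)) (L - {0, - p j})"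
  shows "\<forall>z. \<sigma> (- \<xi>0 + z) \<noteq> 0 \<and> \<sigma> (z + p j) \<noteq> 0 \<longrightarrow>
           \<sigma> z / \<sigma> (- \<xi>0 + z) * (\<sigma> (- \<xi>0 + z + p j) / \<sigma> (z + p j)) = exp v"
proof (intro allI impI)
  have lt: "lat (p 1) (p 2)" using indep by (simp add: lat_def)
  have pL: "p j \<in> lattice (p 1) (p 2)" using j lat.L_p1[OF lt] lat.L_p2[OF lt] by auto
  have p0: "p j \<noteq> 0" using j lat.p1_nz[OF lt] lat.p2_nz[OF lt] by auto
  fix z assume h: "\<sigma> (- \<xi>0 + z) \<noteq> 0 \<and> \<sigma> (z + p j) \<noteq> 0"
  have "\<sigma> z / \<sigma> (- \<xi>0 + z) * (\<sigma> (- \<xi>0 + z + p j) / \<sigma> (z + p j))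
     = exp (- 3 * (z - (- \<xi>0 + z)) / p j + (z - (- \<xi>0 + z)) * (p j)\<^sup>2 * infsum (\<lambda>m. 1 / (m * (m + p j)\<^sup>2)) (L - {0, - p j}))"
    using lat.main_loc[OF lt pL p0, of "- \<xi>0 + z" z] h unfolding \<sigma>_def L_def by simp
  also have "\<dots> = exp v" unfolding v_def by simp
  finally show "\<sigma> z / \<sigma> (- \<xi>0 + z) * (\<sigma> (- \<xi>0 + z + p j) / \<sigma> (z + p j)) = exp v" .
qed

end
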